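(* Let $m\ge2$ be an integer, $\theta=1-1/m$, $\theta<\mu<1$, and let $Z$ be distributed as $\theta-B$ where $B$ is Bernoulli with mean $\mu$. Let $\gamma>0$ be the Lundberg coefficient of $Z$, i.e. the positive solution of $\mathbb{E}[\exp(\gamma Z)]=1$. Then $$\frac{m}{m-1}\log\Bigl(\frac{\mu}{(1-\mu)(m-1)}\Bigr)\le\gamma\le\frac{2m}{m-1}\log\Bigl(\frac{\mu}{(1-\mu)(m-1)}\Bigr).$$ *)

theory Defs
  imports "HOL-Probability.Probability"
begin

text \<open>Z = theta - B with B ~ Bernoulli(mu), realised on bernoulli_pmf mu (True = 1).\<close>
definition Zvar :: "real \<Rightarrow> bool \<Rightarrow> real" where
  "Zvar theta b = theta - (if b then 1 else 0)"

end

theory Submission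
  imports Defs
begin

lemma bern_ineq:
  fixes v :: real
  assumes "v \<ge> 0"
  shows "1 + real n * (v - 1) \<le> v ^ n"
proof (induction n)
  case 0 then show ?case by simp
next
  case (Suc n)
  have "v * (1 + real n * (v - 1)) \<le> v * v ^ n"
    using Suc assms by (simp add: mult_left_mono)
  moreover have "1 + real (Suc n) * (v - 1) \<le> v * (1 + real n * (v - 1))"
  proof -
    have "0 \<le> real n * (v - 1)^2" by simp
    then show ?thesis by (simp add: algebra_simps power2_eq_square)
  qed
  ultimately show ?case by simp
qed

lemma geo_id:
  fixes x :: real
  shows "(x - 1) * (\<Sum>i<n. x ^ i) = x ^ n - 1"
  by (induction n) (simp_all add: algebra_simps)

lemma sum_mono_strict_pow:
  fixes x y :: real
  assumes "0 \<le> x" "x < y" "n \<ge> 2"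
  shows "(\<Sum>i<n. x ^ i) < (\<Sum>i<n. y ^ i)"
proof -
  have "(\<Sum>i<n. x ^ i) = (\<Sum>i\<in>{..<n}-{1}. x ^ i) + x ^ 1"
    using assms by (subst sum.remove[of _ 1]) auto
  moreover have "(\<Sum>i<n. y ^ i) = (\<Sum>i\<in>{..<n}-{1}. y ^ i) + y ^ 1"
    using assms by (subst sum.remove[of _ 1]) auto
  moreover have "(\<Sum>i\<in>{..<n}-{1}. x ^ i) \<le> (\<Sum>i\<in>{..<n}-{1}. y ^ i)"
    by (rule sum_mono) (use assms in \<open>auto intro: power_mono\<close>)
  ultimately show ?thesis using assms by simp
qed

lemma ln_bound:
  fixes R :: real
  assumes "R \<ge> 1"
  shows "2 * R * ln R \<le> R^2 - 1"
proof -
  define g where "g = (\<lambda>x::real. x^2 - 1 - 2 * x * ln x)"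
  have d: "(g has_real_derivative (2 * x - 2 * ln x - 2)) (at x)" if "x > 0" for x
    unfolding g_def using that
    by (auto intro!: derivative_eq_intros simp: field_simps)
  have "g 1 \<le> g R"
  proof (rule DERIV_nonneg_imp_nondecreasing[of 1 R g])
    show "1 \<le> R" by fact
    fix x assume x: "1 \<le> x" "x \<le> R"
    show "\<exists>y. (g has_real_derivative y) (at x) \<and> 0 \<le> y"
      using d[of x] x ln_le_minus_one[of x] by (intro exI[of _ "2 * x - 2 * ln x - 2"]) auto
  qed
  then show ?thesis by (simp add: g_def)
qed

theorem lemma5:
  fixes m :: nat and \<mu> \<theta> \<gamma> :: real
  assumes "m \<ge> 2"
    and "\<theta> = 1 - 1 / real m"
    and "\<theta> < \<mu>" and "\<mu> < 1"
    and "\<gamma> > 0"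
    and "measure_pmf.expectation (bernoulli_pmf \<mu>) (\<lambda>b. exp (\<gamma> * Zvar \<theta> b)) = 1"
  shows "real m / (real m - 1) * ln (\<mu> / ((1 - \<mu>) * (real m - 1))) \<le> \<gamma> \<and>
         \<gamma> \<le> 2 * real m / (real m - 1) * ln (\<mu> / ((1 - \<mu>) * (real m - 1)))"
proof -
  have m1: "real m - 1 > 0" "real m > 0" using assms(1) by auto
  have th0: "\<theta> \<ge> 0"
  proof -
    have "1 / real m \<le> 1" using assms(1) by simp
    then show ?thesis using assms(2) by linarith
  qed
  have mu0: "0 < \<mu>" using assms(3) th0 by linarith
  define u where "u = exp (\<gamma> / real m)"
  have u1: "u > 1" unfolding u_def using assms(5) m1 by simp
  define F where "F = (\<lambda>x::real. \<mu> / x + (1 - \<mu>) * x ^ (m - 1))"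
  define S where "S = (\<lambda>x::real. (1 - \<mu>) * (\<Sum>i<m. x ^ i))"
  have FS: "x * (F x - 1) = (x - 1) * (S x - 1)" if "x > 0" for x
  proof -
    have p: "x * x ^ (m - 1) = x ^ m" using assms(1)
      by (metis One_nat_def Suc_diff_le le_trans one_le_numeral power_Suc diff_Suc_1)
    have "(x - 1) * (S x - 1) = (1 - \<mu>) * ((x - 1) * (\<Sum>i<m. x ^ i)) - x + 1"
      unfolding S_def by (simp add: algebra_simps)
    also have "\<dots> = (1 - \<mu>) * (x ^ m - 1) - x + 1" by (simp add: geo_id)
    also have "\<dots> = x * (F x - 1)" unfolding F_def using that p
      by (simp add: field_simps)
    finally show ?thesis by simp
  qed
  have Fu: "F u = 1"
  proof -
    have e1: "exp (\<gamma> * Zvar \<theta> True) = 1 / u"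
    proof -
      have "\<gamma> * Zvar \<theta> True = - (\<gamma> / real m)"
      proof -
        have "\<theta> - 1 = - (1 / real m)" using assms(2) by simp
        then have "\<gamma> * (\<theta> - 1) = - (\<gamma> / real m)" by simp
        then show ?thesis unfolding Zvar_def by simp
      qed
      then show ?thesis unfolding u_def by (simp add: exp_minus field_simps)
    qed
    have e2: "exp (\<gamma> * Zvar \<theta> False) = u ^ (m - 1)"
    proof -
      have "\<gamma> * \<theta> = real (m - 1) * (\<gamma> / real m)"
      proof -
        have "\<theta> = (real m - 1) / real m" using assms(2) m1 by (simp add: field_simps)
        then show ?thesis using assms(1) by (simp add: of_nat_diff)
      qed
      then show ?thesis unfolding Zvar_def u_def by (simp only: exp_of_nat_mult[symmetric]) simp
    qed
    have "measure_pmf.expectation (bernoulli_pmf \<mu>) (\<lambda>b. exp (\<gamma> * Zvar \<theta> b))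
        = exp (\<gamma> * Zvar \<theta> True) * \<mu> + exp (\<gamma> * Zvar \<theta> False) * (1 - \<mu>)"
      using mu0 assms(4) by simp
    then show ?thesis using assms(6) e1 e2 unfolding F_def by (simp add: field_simps)
  qed
  have Su: "S u = 1" using FS[of u] Fu u1 by simp
  define R where "R = \<mu> / ((1 - \<mu>) * (real m - 1))"
  define L where "L = ln R"
  have R1: "R > 1"
  proof -
    have "\<theta> * real m < \<mu> * real m" using assms(3) m1 by simp
    moreover have "\<theta> * real m = real m - 1" using assms(2) m1 by (simp add: field_simps)
    ultimately have "(1 - \<mu>) * (real m - 1) < \<mu>" by (simp add: algebra_simps)
    moreover have "(1 - \<mu>) * (real m - 1) > 0" using assms(4) m1 by simp
    ultimately show ?thesis unfolding R_def by (simp add: less_divide_eq)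
  qed
  have L0: "L > 0" unfolding L_def using R1 by simp
  have muR: "\<mu> = (1 - \<mu>) * (real m - 1) * R" unfolding R_def using assms(4) m1 by simp
  have hR: "\<mu> / R = (1 - \<mu>) * (real m - 1)" using R1 by (subst muR) simp
  have hR2: "(1 - \<mu>) * R = \<mu> / (real m - 1)" using m1
    by (subst (2) muR) simp
  have Smono: "S x < S y" if "0 \<le> x" "x < y" for x y
    unfolding S_def using sum_mono_strict_pow[OF that assms(1)] assms(4) by simp
  have pw: "exp (c / (real m - 1)) ^ (m - 1) = exp c" for c
  proof -
    have "exp (c / (real m - 1)) ^ (m - 1) = exp (real (m - 1) * (c / (real m - 1)))"
      by (simp only: exp_of_nat_mult[symmetric])
    also have "\<dots> = exp c" using assms(1) m1 by (simp add: of_nat_diff)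
    finally show ?thesis .
  qed
  define u0 where "u0 = exp (L / (real m - 1))"
  have u01: "u0 > 1" unfolding u0_def using L0 m1 by simp
  have Fu0: "F u0 \<le> 1"
  proof -
    define v where "v = exp (- L / (real m - 1))"
    have v0: "v \<ge> 0" unfolding v_def by simp
    have vu: "v = 1 / u0" unfolding v_def u0_def by (simp add: exp_minus inverse_eq_divide)
    have vp: "v ^ (m - 1) = 1 / R" using pw[of "-L"] R1 unfolding v_def L_def
      by (simp add: exp_minus inverse_eq_divide)
    have "1 + real (m - 1) * (v - 1) \<le> v ^ (m - 1)" by (rule bern_ineq[OF v0])
    then have b: "(real m - 1) * v \<le> 1 / R + (real m - 2)"
      using assms(1) vp by (simp add: of_nat_diff algebra_simps)
    have "\<mu> * v \<le> \<mu> * (1 / R + (real m - 2)) / (real m - 1)"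
    proof -
      have "\<mu> * ((real m - 1) * v) \<le> \<mu> * (1 / R + (real m - 2))"
        using b mu0 by (simp add: mult_left_mono)
      then show ?thesis using m1 by (simp add: le_divide_eq algebra_simps)
    qed
    also have "\<dots> = 1 - \<mu> / (real m - 1)"
    proof -
      have "\<mu> * (1 / R + (real m - 2)) = (1 - \<mu>) * (real m - 1) + \<mu> * (real m - 2)"
        using hR by (simp add: algebra_simps)
      also have "\<dots> = (real m - 1) - \<mu>" by (simp add: algebra_simps)
      finally show ?thesis using m1 by (simp add: diff_divide_distrib)
    qed
    finally have "\<mu> * v \<le> 1 - \<mu> / (real m - 1)" .
    moreover have "u0 ^ (m - 1) = R" using pw[of L] R1 unfolding u0_def L_def by simp
    ultimately show ?thesis unfolding F_def using vu hR2 by simp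
  qed
  have "S u0 \<le> 1"
  proof -
    have "u0 * (F u0 - 1) \<le> 0" using Fu0 u01 by (simp add: mult_nonneg_nonpos)
    then have "(u0 - 1) * (S u0 - 1) \<le> 0" using FS[of u0] u01 by simp
    then show ?thesis using u01 by (simp add: mult_le_0_iff)
  qed
  then have "u0 \<le> u" using Smono[of u u0] Su u1 by force
  then have "L / (real m - 1) \<le> \<gamma> / real m" unfolding u0_def u_def by simp
  then have low: "real m / (real m - 1) * L \<le> \<gamma>" using m1 by (simp add: field_simps)
  define u1' where "u1' = exp (2 * L / (real m - 1))"
  have u11: "u1' > 1" unfolding u1'_def using L0 m1 by simp
  have Fu1: "F u1' \<ge> 1"
  proof -
    have e2: "exp (2 * L) = R^2"
    proof -
      have "exp (2 * L) = exp (L + L)" by (simp only: mult_2)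
      also have "\<dots> = exp L * exp L" by (rule exp_add)
      also have "\<dots> = R^2" using R1 unfolding L_def by (simp add: power2_eq_square)
      finally show ?thesis .
    qed
    have p: "u1' ^ (m - 1) = R^2" unfolding u1'_def
      by (subst pw[of "2 * L"]) (rule e2)
    have i: "1 / u1' \<ge> 1 - 2 * L / (real m - 1)"
    proof -
      have "1 / u1' = exp (- (2 * L / (real m - 1)))" unfolding u1'_def by (simp add: exp_minus inverse_eq_divide)
      then show ?thesis using exp_ge_add_one_self[of "- (2 * L / (real m - 1))"] by simp
    qed
    have lb: "2 * R * L \<le> R^2 - 1" unfolding L_def using ln_bound R1 by simp
    have "F u1' \<ge> \<mu> * (1 - 2 * L / (real m - 1)) + (1 - \<mu>) * R^2"
    proof -
      have "\<mu> * (1 / u1') \<ge> \<mu> * (1 - 2 * L / (real m - 1))"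
        using i mu0 by (intro mult_left_mono) auto
      moreover have "F u1' = \<mu> * (1 / u1') + (1 - \<mu>) * R^2" unfolding F_def p by simp
      ultimately show ?thesis by linarith
    qed
    moreover have "\<mu> * (1 - 2 * L / (real m - 1)) + (1 - \<mu>) * R^2 \<ge> 1"
    proof -
      have "\<mu> * (2 * L / (real m - 1)) = (1 - \<mu>) * (2 * R * L)"
      proof -
        have "\<mu> * (2 * L / (real m - 1)) = 2 * L * (\<mu> / (real m - 1))" by simp
        also have "\<dots> = 2 * L * ((1 - \<mu>) * R)" by (simp only: hR2)
        finally show ?thesis by (simp only: ac_simps)
      qed
      also have "\<dots> \<le> (1 - \<mu>) * (R^2 - 1)" using lb assms(4) by simp
      finally show ?thesis by (simp add: algebra_simps)
    qed
    ultimately show ?thesis by linarith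
  qed
  have "S u1' \<ge> 1"
  proof -
    have "u1' * (F u1' - 1) \<ge> 0" using Fu1 u11 by simp
    then have "(u1' - 1) * (S u1' - 1) \<ge> 0" using FS[of u1'] u11 by simp
    then show ?thesis using u11 by (simp add: zero_le_mult_iff)
  qed
  then have "u \<le> u1'" using Smono[of u1' u] Su u11 by force
  then have "\<gamma> / real m \<le> 2 * L / (real m - 1)" unfolding u1'_def u_def by simp
  then have up: "\<gamma> \<le> 2 * real m / (real m - 1) * L" using m1 by (simp add: field_simps)
  show ?thesis using low up unfolding L_def R_def by simp
qed

end
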